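(* There is an absolute constant $c>0$ such that the following holds. Let $\mathbf T$ be a size-$s$ stochastic decision tree over $\{0,1\}^n$. For every $\varepsilon\in(0,1/2)$ there is a stochastic-leaf decision tree $\overline{\mathbf T}$ of size $S\le s^{c/\varepsilon^2}$ such that $\mathbb{E}_{\mathbf x}\big[|\mu_{\mathbf T}(\mathbf x)-\mu_{\overline{\mathbf T}}(\mathbf x)|\big]\le\varepsilon$, where $\mathbf x$ is uniform on $\{0,1\}^n$.
   Context: A stochastic decision tree (DT) $\mathbf{T}$ over $\{0,1\}^n$ is a rooted binary tree whose internal nodes are either deterministic nodes, each labeled by a variable $x_i$ ($i\in[n]$) with one outgoing edge followed when $x_i=0$ and one when $x_i=1$, or stochastic nodes, each with two outgoing edges followed with probabilities $p$ and $1-p$ (for a node-specific $p\in[0,1]$, using fresh independent randomness at each node), and whose leaves are labeled $0$ or $1$. On input $x$, $\mathbf{T}(x)$ is the (random) label of the leaf reached. The size of a DT is its number of leaves. A stochastic-leaf DT is a stochastic DT in which every stochastic node has only leaves as its children. The mean function of $\mathbf T$ is $\mu_{\mathbf T}(x)=\Pr[\mathbf T(x)=1]$. *)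

theory Defs
  imports Complex_Main
begin

text \<open>Inputs are bit lists of length n;
  Query i l r follows l when bit i is 0 (False) and r when it is 1 (True).\<close>

datatype sdt = Leaf bool | Query nat sdt sdt | Stoch real sdt sdt

fun wf_sdt :: "nat \<Rightarrow> sdt \<Rightarrow> bool" where
  "wf_sdt n (Leaf b) = True"
| "wf_sdt n (Query i l r) = (i < n \<and> wf_sdt n l \<and> wf_sdt n r)"
| "wf_sdt n (Stoch p l r) = (0 \<le> p \<and> p \<le> 1 \<and> wf_sdt n l \<and> wf_sdt n r)"

fun sdt_size :: "sdt \<Rightarrow> nat" where
  "sdt_size (Leaf b) = 1"
| "sdt_size (Query i l r) = sdt_size l + sdt_size r"
| "sdt_size (Stoch p l r) = sdt_size l + sdt_size r"

fun is_leaf :: "sdt \<Rightarrow> bool" where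
  "is_leaf (Leaf b) = True"
| "is_leaf _ = False"

fun stoch_leaf :: "sdt \<Rightarrow> bool" where
  "stoch_leaf (Leaf b) = True"
| "stoch_leaf (Query i l r) = (stoch_leaf l \<and> stoch_leaf r)"
| "stoch_leaf (Stoch p l r) = (is_leaf l \<and> is_leaf r)"

fun mu :: "sdt \<Rightarrow> bool list \<Rightarrow> real" where
  "mu (Leaf b) x = (if b then 1 else 0)"
| "mu (Query i l r) x = (if x ! i then mu r x else mu l x)"
| "mu (Stoch p l r) x = p * mu l x + (1 - p) * mu r x"

definition cube :: "nat \<Rightarrow> bool list set" where
  "cube n = {x. length x = n}"

definition unif_exp :: "nat \<Rightarrow> (bool list \<Rightarrow> real) \<Rightarrow> real" where
  "unif_exp n f = (\<Sum>x\<in>cube n. f x) / 2 ^ n"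

end

theory Submission
  imports Defs
begin

lemma cube_finite: "finite (cube n)"
proof -
  have "cube n = {xs. set xs \<subseteq> (UNIV::bool set) \<and> length xs = n}" by (auto simp: cube_def)
  thus ?thesis using finite_lists_length_eq[of "UNIV::bool set" n] by simp
qed

lemma cube_card: "card (cube n) = 2 ^ n"
proof -
  have "cube n = {xs. set xs \<subseteq> (UNIV::bool set) \<and> length xs = n}" by (auto simp: cube_def)
  thus ?thesis using card_lists_length_eq[of "UNIV::bool set" n] by simp
qed

fun det :: "sdt \<Rightarrow> bool" where
  "det (Leaf b) = True"
| "det (Query i l r) = (det l \<and> det r)"
| "det (Stoch p l r) = False"

function build :: "real \<Rightarrow> real \<Rightarrow> sdt list \<Rightarrow> sdt" where
  "build k a [] = Stoch (a/k) (Leaf True) (Leaf False)"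
| "build k a (Leaf b # ts) = build k (a + (if b then 1 else 0)) ts"
| "build k a (Query i l r # ts) = Query i (build k a (l#ts)) (build k a (r#ts))"
| "build k a (Stoch p l r # ts) = build k a (l#ts)"
  by pat_completeness auto
termination by (relation "measure (\<lambda>(k,a,ts). sum_list (map size ts) + length ts)") auto

lemma build_mu: "(\<forall>t\<in>set ts. det t) \<Longrightarrow> mu (build k a ts) x = (a + sum_list (map (\<lambda>t. mu t x) ts)) / k"
  by (induction k a ts rule: build.induct) (auto simp: add_divide_distrib add.assoc)

lemma build_sl: "stoch_leaf (build k a ts)"
  by (induction k a ts rule: build.induct) auto

lemma build_size: "(\<forall>t\<in>set ts. det t) \<Longrightarrow> sdt_size (build k a ts) \<le> 2 * prod_list (map sdt_size ts)"
proof (induction k a ts rule: build.induct)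
  case (3 k a i l r ts)
  then have "sdt_size (build k a (Query i l r # ts)) \<le> 2 * prod_list (map sdt_size (l#ts)) + 2 * prod_list (map sdt_size (r#ts))"
    by simp
  also have "\<dots> = 2 * prod_list (map sdt_size (Query i l r # ts))" by (simp add: algebra_simps)
  finally show ?case .
qed auto

lemma build_wf: "(\<forall>t\<in>set ts. det t \<and> wf_sdt n t) \<Longrightarrow> 0 \<le> (a::real) \<Longrightarrow> a + real (length ts) \<le> k \<Longrightarrow> wf_sdt n (build k a ts)"
  by (induction k a ts rule: build.induct) (auto simp: divide_le_eq_1)

fun dist :: "sdt \<Rightarrow> (real \<times> sdt) list" where
  "dist (Leaf b) = [(1, Leaf b)]"
| "dist (Query i l r) = concat (map (\<lambda>(p,a). map (\<lambda>(q,b). (p*q, Query i a b)) (dist r)) (dist l))"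
| "dist (Stoch p l r) = map (\<lambda>(w,a). (p*w, a)) (dist l) @ map (\<lambda>(w,a). ((1-p)*w, a)) (dist r)"

definition E :: "(real \<times> sdt) list \<Rightarrow> (sdt \<Rightarrow> real) \<Rightarrow> real" where
  "E D f = sum_list (map (\<lambda>(w,t). w * f t) D)"

lemma E_Nil[simp]: "E [] f = 0" by (simp add: E_def)
lemma E_Cons[simp]: "E ((w,t)#D) f = w * f t + E D f" by (simp add: E_def)
lemma E_append[simp]: "E (xs @ ys) f = E xs f + E ys f" by (simp add: E_def)

lemma E_scale: "E (map (\<lambda>(w,a). (c*w, a)) D) f = c * E D f"
  by (induction D) (auto simp: algebra_simps)

lemma E_prod_inner: "E (map (\<lambda>(q,b). (p*q, F b)) R) f = p * E R (\<lambda>b. f (F b))"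
  by (induction R) (auto simp: algebra_simps)

lemma E_prod: "E (concat (map (\<lambda>(p,a). map (\<lambda>(q,b). (p*q, F a b)) R) L)) f = E L (\<lambda>a. E R (\<lambda>b. f (F a b)))"
  by (induction L) (auto simp: E_prod_inner)

lemma E_add: "E D (\<lambda>t. f t + g t) = E D f + E D g"
  by (induction D) (auto simp: algebra_simps)

lemma E_diff: "E D (\<lambda>t. f t - g t) = E D f - E D g"
  by (induction D) (auto simp: algebra_simps)

lemma E_cmult: "E D (\<lambda>t. c * f t) = c * E D f"
  by (induction D) (auto simp: algebra_simps)

lemma E_const: "E D (\<lambda>_. c) = c * E D (\<lambda>_. 1)"
  by (induction D) (auto simp: algebra_simps)

lemma E_sum: "E D (\<lambda>t. \<Sum>x\<in>A. F x t) = (\<Sum>x\<in>A. E D (F x))"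
  by (induction D) (auto simp: sum_distrib_left sum.distrib)

lemma E_mono: "(\<forall>y\<in>set D. 0 \<le> fst y \<and> f (snd y) \<le> g (snd y)) \<Longrightarrow> E D f \<le> E D g"
  by (induction D) (auto intro!: add_mono mult_left_mono)

lemma dist_sum1: "E (dist T) (\<lambda>_. 1) = 1"
proof (induction T)
  case (Query i l r)
  then show ?case by (simp add: E_prod)
next
  case (Stoch p l r)
  then show ?case by (simp add: E_scale)
qed simp

lemma dist_mu: "E (dist T) (\<lambda>t. mu t x) = mu T x"
proof (induction T)
  case (Query i l r)
  show ?case
  proof (cases "x ! i")
    case True
    then have "E (dist (Query i l r)) (\<lambda>t. mu t x) = E (dist l) (\<lambda>a. E (dist r) (\<lambda>b. mu b x))"
      by (simp add: E_prod)
    also have "\<dots> = mu r x" using Query by (subst E_const) (simp add: dist_sum1)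
    finally show ?thesis using True by simp
  next
    case False
    then have "E (dist (Query i l r)) (\<lambda>t. mu t x) = E (dist l) (\<lambda>a. E (dist r) (\<lambda>b. mu a x))"
      by (simp add: E_prod)
    also have "\<dots> = E (dist l) (\<lambda>a. mu a x)" by (subst E_const) (simp add: dist_sum1)
    finally show ?thesis using False Query by simp
  qed
next
  case (Stoch p l r)
  then show ?case by (simp add: E_scale)
qed simp

lemma dist_set: "wf_sdt n T \<Longrightarrow> \<forall>y\<in>set (dist T). 0 \<le> fst y \<and> det (snd y) \<and> wf_sdt n (snd y) \<and> sdt_size (snd y) \<le> sdt_size T"
proof (induction T)
  case (Query i l r)
  then show ?case by (fastforce intro: add_mono)
next
  case (Stoch p l r)
  then show ?case by fastforce
qed simp

lemma mu_bnd: "wf_sdt n t \<Longrightarrow> 0 \<le> mu t x \<and> mu t x \<le> 1"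
proof (induction t)
  case (Stoch p l r)
  then have "p * mu l x + (1 - p) * mu r x \<le> p * 1 + (1-p) * 1"
    by (intro add_mono mult_left_mono) auto
  with Stoch show ?case by auto
qed auto

lemma sq_le1: "0 \<le> (a::real) \<Longrightarrow> a \<le> 1 \<Longrightarrow> 0 \<le> b \<Longrightarrow> b \<le> 1 \<Longrightarrow> (a - b)^2 \<le> 1"
proof -
  assume "0 \<le> a" "a \<le> 1" "0 \<le> b" "b \<le> 1"
  then have "\<bar>a - b\<bar> \<le> 1" by auto
  then have "\<bar>a - b\<bar> * \<bar>a - b\<bar> \<le> 1 * 1" by (intro mult_mono) auto
  thus ?thesis by (simp add: power2_eq_square)
qed

lemma maurey:
  fixes D :: "(real \<times> sdt) list" and \<mu> :: "bool list \<Rightarrow> real" and N :: "bool list set"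
  assumes fin: "finite N" and wpos: "\<forall>y\<in>set D. 0 \<le> fst y" and sum1: "E D (\<lambda>_. 1) = 1"
    and mean: "\<forall>x\<in>N. E D (\<lambda>t. mu t x) = \<mu> x"
    and bnd: "\<forall>y\<in>set D. \<forall>x\<in>N. 0 \<le> mu (snd y) x \<and> mu (snd y) x \<le> 1"
    and mbnd: "\<forall>x\<in>N. 0 \<le> \<mu> x \<and> \<mu> x \<le> 1"
  shows "\<exists>ts. length ts = k \<and> set ts \<subseteq> snd ` set D \<and>
     (\<Sum>x\<in>N. (real k * \<mu> x - sum_list (map (\<lambda>t. mu t x) ts))^2) \<le> real k * card N"
proof (induction k)
  case 0
  show ?case by (intro exI[of _ "[]"]) simp
next
  case (Suc k)
  then obtain ts where ts: "length ts = k" "set ts \<subseteq> snd ` set D"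
     "(\<Sum>x\<in>N. (real k * \<mu> x - sum_list (map (\<lambda>t. mu t x) ts))^2) \<le> real k * card N" by blast
  define h where "h x = real k * \<mu> x - sum_list (map (\<lambda>t. mu t x) ts)" for x
  define g where "g t = (\<Sum>x\<in>N. (h x + (\<mu> x - mu t x))^2)" for t
  have Ec: "E D (\<lambda>_. c) = c" for c by (subst E_const) (simp add: sum1)
  have Dne: "D \<noteq> []" using sum1 by auto
  let ?S = "snd ` set D"
  have fS: "finite ?S" and neS: "?S \<noteq> {}" using Dne by auto
  have "Min (g ` ?S) \<in> g ` ?S" using fS neS by (intro Min_in) auto
  then obtain t0 where t0: "t0 \<in> ?S" "g t0 = Min (g ` ?S)" by (metis (no_types, lifting) imageE)
  have t0min: "\<forall>y\<in>set D. g t0 \<le> g (snd y)" using t0 fS by auto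
  have "g t0 = E D (\<lambda>_. g t0)" by (subst E_const) (simp add: sum1)
  also have "\<dots> \<le> E D g" using t0min wpos by (intro E_mono) auto
  also have "\<dots> = (\<Sum>x\<in>N. E D (\<lambda>t. (h x + (\<mu> x - mu t x))^2))"
    unfolding g_def by (rule E_sum)
  also have "\<dots> \<le> (\<Sum>x\<in>N. (h x)^2 + 1)"
  proof (rule sum_mono)
    fix x assume x: "x \<in> N"
    have eq: "(h x + (\<mu> x - mu t x))^2 = ((h x)^2 + 2 * h x * \<mu> x) - (2 * h x) * mu t x + (\<mu> x - mu t x)^2" for t
      by (simp add: power2_eq_square algebra_simps)
    have "E D (\<lambda>t. (h x + (\<mu> x - mu t x))^2) =
        ((h x)^2 + 2 * h x * \<mu> x) * E D (\<lambda>_. 1) - (2 * h x) * E D (\<lambda>t. mu t x) + E D (\<lambda>t. (\<mu> x - mu t x)^2)"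
      unfolding eq by (simp only: E_add E_diff E_cmult) (simp add: Ec algebra_simps)
    also have "\<dots> = (h x)^2 + E D (\<lambda>t. (\<mu> x - mu t x)^2)" using sum1 mean x by simp
    also have "E D (\<lambda>t. (\<mu> x - mu t x)^2) \<le> E D (\<lambda>_. 1)"
      using wpos bnd mbnd x by (intro E_mono) (fastforce intro!: sq_le1)
    finally show "E D (\<lambda>t. (h x + (\<mu> x - mu t x))^2) \<le> (h x)^2 + 1" using sum1 by simp
  qed
  also have "\<dots> = (\<Sum>x\<in>N. (h x)^2) + card N" by (simp add: sum.distrib)
  also have "\<dots> \<le> real (Suc k) * card N" using ts(3) unfolding h_def by (simp add: algebra_simps)
  finally have fin1: "g t0 \<le> real (Suc k) * card N" .
  have "g t0 = (\<Sum>x\<in>N. (real (Suc k) * \<mu> x - sum_list (map (\<lambda>t. mu t x) (t0 # ts)))^2)"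
    unfolding g_def h_def by (intro sum.cong) (auto simp: algebra_simps)
  then show ?case using fin1 ts t0 by (intro exI[of _ "t0 # ts"]) auto
qed

lemma size_pos: "sdt_size t \<ge> 1"
  by (induction t) auto

lemma size1: "\<exists>b. t = Leaf b" if "sdt_size t = 1"
proof (cases t)
  case (Query i l r) then show ?thesis using that size_pos[of l] size_pos[of r] by simp
next
  case (Stoch p l r) then show ?thesis using that size_pos[of l] size_pos[of r] by simp
qed simp

lemma prod_bound: "(\<forall>t\<in>set ts. f t \<le> (s::nat)) \<Longrightarrow> prod_list (map f ts) \<le> s ^ length ts"
  by (induction ts) (auto intro: mult_le_mono)

lemma abs_bound: "0 < (e::real) \<Longrightarrow> \<bar>d\<bar> \<le> d^2 / (2*e) + e/2"
proof -
  assume e: "0 < e"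
  have "0 \<le> (\<bar>d\<bar> - e)^2" by simp
  then have "2 * e * \<bar>d\<bar> \<le> d^2 + e^2" by (simp add: power2_eq_square algebra_simps)
  then have "\<bar>d\<bar> \<le> (d^2 + e^2) / (2*e)" using e by (simp add: field_simps)
  also have "\<dots> = d^2 / (2*e) + e/2" using e by (simp add: field_simps power2_eq_square)
  finally show ?thesis .
qed

theorem lemma4:
  shows "\<exists>c::real. c > 0 \<and>
    (\<forall>n T (\<epsilon>::real). wf_sdt n T \<and> 0 < \<epsilon> \<and> \<epsilon> < 1/2 \<longrightarrow>
       (\<exists>T'. wf_sdt n T' \<and> stoch_leaf T' \<and>
          real (sdt_size T') \<le> real (sdt_size T) powr (c / \<epsilon>^2) \<and>
          unif_exp n (\<lambda>x. \<bar>mu T x - mu T' x\<bar>) \<le> \<epsilon>))"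
proof (intro exI[of _ 2] conjI allI impI)
  fix n T and \<epsilon> :: real
  assume A: "wf_sdt n T \<and> 0 < \<epsilon> \<and> \<epsilon> < 1/2"
  then have wf: "wf_sdt n T" and e0: "0 < \<epsilon>" and e1: "\<epsilon> < 1/2" by auto
  define s where "s = sdt_size T"
  show "\<exists>T'. wf_sdt n T' \<and> stoch_leaf T' \<and>
          real (sdt_size T') \<le> real (sdt_size T) powr (2 / \<epsilon>^2) \<and>
          unif_exp n (\<lambda>x. \<bar>mu T x - mu T' x\<bar>) \<le> \<epsilon>"
  proof (cases "s = 1")
    case True
    then obtain b where Tb: "T = Leaf b" using size1[of T] s_def by auto
    show ?thesis using e0 by (intro exI[of _ T]) (simp add: Tb unif_exp_def)
  next
    case False
    then have s2: "s \<ge> 2" using size_pos[of T] s_def by linarith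
    define k where "k = nat \<lceil>1/\<epsilon>^2\<rceil>"
    have ee: "\<epsilon>^2 < 1/4" proof -
      have "\<epsilon> * \<epsilon> < (1/2) * (1/2)" using e0 e1 by (intro mult_strict_mono) auto
      thus ?thesis by (simp add: power2_eq_square)
    qed
    have ie: "1/\<epsilon>^2 > 4" using ee e0 by (simp add: field_simps)
    have k1: "real k \<ge> 1/\<epsilon>^2" unfolding k_def by linarith
    have k2: "real k \<le> 1/\<epsilon>^2 + 1"
    proof -
      have "real k = of_int \<lceil>1/\<epsilon>^2\<rceil>" unfolding k_def using ie by simp
      thus ?thesis using of_int_ceiling_le_add_one[of "1/\<epsilon>^2"] by linarith
    qed
    have kpos: "real k > 0" using k1 ie by linarith
    let ?D = "dist T"
    have ds: "\<forall>y\<in>set ?D. 0 \<le> fst y \<and> det (snd y) \<and> wf_sdt n (snd y) \<and> sdt_size (snd y) \<le> s"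
      using dist_set[OF wf] s_def by simp
    obtain ts where ts: "length ts = k" "set ts \<subseteq> snd ` set ?D"
      "(\<Sum>x\<in>cube n. (real k * mu T x - sum_list (map (\<lambda>t. mu t x) ts))^2) \<le> real k * card (cube n)"
      using maurey[of "cube n" ?D "mu T" k] cube_finite ds dist_sum1 dist_mu mu_bnd wf by fastforce
    have tsp: "\<forall>t\<in>set ts. det t \<and> wf_sdt n t \<and> sdt_size t \<le> s" using ts(2) ds by auto
    define T' where "T' = build (real k) 0 ts"
    have muT': "mu T' x = sum_list (map (\<lambda>t. mu t x) ts) / real k" for x
      unfolding T'_def using tsp by (simp add: build_mu)
    have wfT': "wf_sdt n T'" unfolding T'_def using tsp ts(1) by (intro build_wf) auto
    have "sdt_size T' \<le> 2 * prod_list (map sdt_size ts)" unfolding T'_def using tsp by (intro build_size) auto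
    also have "\<dots> \<le> 2 * s ^ k" using prod_bound[of ts sdt_size s] tsp ts(1) by auto
    also have "\<dots> \<le> s ^ (k+1)" using s2 by simp
    finally have "real (sdt_size T') \<le> real s ^ (k+1)" by (metis of_nat_le_iff of_nat_power)
    also have "\<dots> = real s powr real (k+1)" using s2 powr_realpow[of "real s" "k+1"] by simp
    also have "\<dots> \<le> real s powr (2/\<epsilon>^2)"
      using s2 k2 ie by (intro powr_mono) (auto simp: field_simps)
    finally have szT': "real (sdt_size T') \<le> real (sdt_size T) powr (2/\<epsilon>^2)" using s_def by simp
    define d where "d x = mu T x - mu T' x" for x
    have dsq: "(d x)^2 = (real k * mu T x - sum_list (map (\<lambda>t. mu t x) ts))^2 / (real k)^2" for x
      unfolding d_def muT' using kpos by (simp add: field_simps)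
    have "(\<Sum>x\<in>cube n. (d x)^2) \<le> real k * card (cube n) / (real k)^2"
      using ts(3) kpos by (simp add: dsq sum_divide_distrib[symmetric] divide_right_mono)
    also have "\<dots> = card (cube n) / real k" using kpos by (simp add: power2_eq_square)
    also have "\<dots> \<le> card (cube n) * \<epsilon>^2"
    proof -
      have "1 / real k \<le> \<epsilon>^2" using k1 e0 kpos by (simp add: field_simps)
      then show ?thesis by (metis mult_left_mono of_nat_0_le_iff times_divide_eq_right mult_1_right)
    qed
    finally have sq: "(\<Sum>x\<in>cube n. (d x)^2) \<le> card (cube n) * \<epsilon>^2" .
    have "(\<Sum>x\<in>cube n. \<bar>d x\<bar>) \<le> (\<Sum>x\<in>cube n. (d x)^2 / (2*\<epsilon>) + \<epsilon>/2)"
      using e0 by (intro sum_mono abs_bound)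
    also have "\<dots> = (\<Sum>x\<in>cube n. (d x)^2) / (2*\<epsilon>) + card (cube n) * \<epsilon>/2"
      by (simp add: sum.distrib sum_divide_distrib)
    also have "\<dots> \<le> card (cube n) * \<epsilon>^2 / (2*\<epsilon>) + card (cube n) * \<epsilon>/2"
      using sq e0 by (intro add_right_mono divide_right_mono) auto
    also have "\<dots> = card (cube n) * \<epsilon>" using e0 by (simp add: field_simps power2_eq_square)
    finally have L1: "(\<Sum>x\<in>cube n. \<bar>d x\<bar>) \<le> 2^n * \<epsilon>" by (simp add: cube_card)
    have "unif_exp n (\<lambda>x. \<bar>mu T x - mu T' x\<bar>) \<le> \<epsilon>"
      using L1 unfolding unif_exp_def d_def by (simp add: divide_le_eq mult.commute)
    then show ?thesis using wfT' szT' T'_def build_sl by blast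
  qed
qed simp

end
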